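(* Let $S\subseteq\mathbb{N}^{\mathbb{N}}$. Then $S$ is guessable if and only if $S$ is $\mathbf{\Delta}^0_2$.
   Context: A function $G:\mathbb{N}^{<\mathbb{N}}\to\{0,1\}$ ($\mathbb{N}^{<\mathbb{N}}$ = finite sequences of naturals) is a guesser for $S\subseteq\mathbb{N}^{\mathbb{N}}$ if for every $f:\mathbb{N}\to\mathbb{N}$ there is $m>0$ such that for all $n>m$, $G(f(0),\ldots,f(n))$ equals $1$ if $f\in S$ and $0$ if $f\notin S$; $S$ is guessable if it has a guesser. $\mathbb{N}^{\mathbb{N}}$ carries the (Baire space) topology whose basic open sets are $\{f\in\mathbb{N}^{\mathbb{N}}: f \text{ extends } f_0\}$ for $f_0\in\mathbb{N}^{<\mathbb{N}}$. A set is $\mathbf{\Delta}^0_2$ if it is both $G_\delta$ (a countable intersection of open sets) and $F_\sigma$ (a countable union of closed sets). *)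

theory Defs
  imports Main
begin

text \<open>Finite sequences of naturals are lists; the values 0/1 of a guesser are rendered
  as False/True.  \<open>G (map f [0..<Suc n])\<close> is G(f(0),...,f(n)).\<close>

definition guesser :: "(nat list \<Rightarrow> bool) \<Rightarrow> (nat \<Rightarrow> nat) set \<Rightarrow> bool" where
  "guesser G S \<longleftrightarrow>
     (\<forall>f. \<exists>m>0. \<forall>n>m. G (map f [0..<Suc n]) = (f \<in> S))"

definition guessable :: "(nat \<Rightarrow> nat) set \<Rightarrow> bool" where
  "guessable S \<longleftrightarrow> (\<exists>G. guesser G S)"

definition basic_open :: "nat list \<Rightarrow> (nat \<Rightarrow> nat) set" where
  "basic_open s = {f. \<forall>i<length s. f i = s ! i}"

definition baire_open :: "(nat \<Rightarrow> nat) set \<Rightarrow> bool" where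
  "baire_open U \<longleftrightarrow> (\<exists>B. U = \<Union> (basic_open ` B))"

definition baire_closed :: "(nat \<Rightarrow> nat) set \<Rightarrow> bool" where
  "baire_closed C \<longleftrightarrow> baire_open (- C)"

definition baire_G_delta :: "(nat \<Rightarrow> nat) set \<Rightarrow> bool" where
  "baire_G_delta S \<longleftrightarrow> (\<exists>U :: nat \<Rightarrow> (nat \<Rightarrow> nat) set. (\<forall>i. baire_open (U i)) \<and> S = (\<Inter>i. U i))"

definition baire_F_sigma :: "(nat \<Rightarrow> nat) set \<Rightarrow> bool" where
  "baire_F_sigma S \<longleftrightarrow> (\<exists>C :: nat \<Rightarrow> (nat \<Rightarrow> nat) set. (\<forall>i. baire_closed (C i)) \<and> S = (\<Union>i. C i))"

definition baire_Delta02 :: "(nat \<Rightarrow> nat) set \<Rightarrow> bool" where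
  "baire_Delta02 S \<longleftrightarrow> baire_G_delta S \<and> baire_F_sigma S"

end

theory Submission
  imports Defs
begin

lemma prefix_basic_open:
  "(f \<in> basic_open s \<and> length s = n) \<longleftrightarrow> s = map f [0..<n]"
  unfolding basic_open_def
  by (auto intro: nth_equalityI)

lemma open_prefix_set:
  "baire_open {f. \<exists>n>m. P (map f [0..<Suc n])}"
proof -
  have "{f. \<exists>n>m. P (map f [0..<Suc n])} =
        \<Union> (basic_open ` {s. \<exists>n>m. length s = Suc n \<and> P s})"
  proof (rule set_eqI, rule iffI)
    fix f assume "f \<in> {f. \<exists>n>m. P (map f [0..<Suc n])}"
    then obtain n where "n > m" "P (map f [0..<Suc n])" by auto
    moreover have "f \<in> basic_open (map f [0..<Suc n])"
      using prefix_basic_open by blast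
    ultimately show "f \<in> \<Union> (basic_open ` {s. \<exists>n>m. length s = Suc n \<and> P s})"
      by force
  next
    fix f assume "f \<in> \<Union> (basic_open ` {s. \<exists>n>m. length s = Suc n \<and> P s})"
    then obtain s n where "n > m" "length s = Suc n" "P s" "f \<in> basic_open s" by auto
    then have "s = map f [0..<Suc n]" using prefix_basic_open by blast
    then show "f \<in> {f. \<exists>n>m. P (map f [0..<Suc n])}" using \<open>n>m\<close> \<open>P s\<close> by auto
  qed
  then show ?thesis unfolding baire_open_def by blast
qed

lemma dir1:
  assumes "guesser G S"
  shows "baire_Delta02 S"
proof -
  define U where "U m = {f. \<exists>n>m. G (map f [0..<Suc n])}" for m
  define C where "C m = {f. \<forall>n>m. G (map f [0..<Suc n])}" for m
  have gd: "baire_G_delta S"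
    unfolding baire_G_delta_def
  proof (intro exI conjI allI)
    fix i show "baire_open (U i)" unfolding U_def by (rule open_prefix_set)
  next
    show "S = (\<Inter>i. U i)"
    proof (rule set_eqI, rule iffI)
      fix f assume fS: "f \<in> S"
      obtain m0 where m0: "\<forall>n>m0. G (map f [0..<Suc n]) = (f \<in> S)"
        using assms unfolding guesser_def by blast
      show "f \<in> (\<Inter>i. U i)"
      proof
        fix m show "f \<in> U m" unfolding U_def
          using m0[rule_format, of "max m m0 + 1"] fS by (intro CollectI exI[of _ "max m m0 + 1"]) auto
      qed
    next
      fix f assume f: "f \<in> (\<Inter>i. U i)"
      obtain m0 where m0: "\<forall>n>m0. G (map f [0..<Suc n]) = (f \<in> S)"
        using assms unfolding guesser_def by blast
      from f have "f \<in> U m0" by blast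
      then show "f \<in> S" unfolding U_def using m0 by auto
    qed
  qed
  have fs: "baire_F_sigma S"
    unfolding baire_F_sigma_def
  proof (intro exI conjI allI)
    fix i
    have "- C i = {f. \<exists>n>i. (\<lambda>s. \<not> G s) (map f [0..<Suc n])}" unfolding C_def by auto
    then show "baire_closed (C i)" unfolding baire_closed_def using open_prefix_set[of i "\<lambda>s. \<not> G s"] by simp
  next
    show "S = (\<Union>i. C i)"
    proof (rule set_eqI, rule iffI)
      fix f assume fS: "f \<in> S"
      obtain m0 where m0: "\<forall>n>m0. G (map f [0..<Suc n]) = (f \<in> S)"
        using assms unfolding guesser_def by blast
      then have "f \<in> C m0" unfolding C_def using fS by auto
      then show "f \<in> (\<Union>i. C i)" by blast
    next
      fix f assume "f \<in> (\<Union>i. C i)"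
      then obtain m where m: "f \<in> C m" by blast
      obtain m0 where m0: "\<forall>n>m0. G (map f [0..<Suc n]) = (f \<in> S)"
        using assms unfolding guesser_def by blast
      from m have "G (map f [0..<Suc (max m m0 + 1)])" unfolding C_def by (simp del: upt_Suc)
      then show "f \<in> S" using m0[rule_format, of "max m m0 + 1"] by auto
    qed
  qed
  show ?thesis using gd fs unfolding baire_Delta02_def by blast
qed

lemma closed_avoid:
  assumes "baire_closed E" "f \<notin> E"
  shows "\<exists>N. \<forall>n\<ge>N. basic_open (map f [0..<n]) \<inter> E = {}"
proof -
  obtain B where B: "- E = \<Union> (basic_open ` B)"
    using assms(1) unfolding baire_closed_def baire_open_def by blast
  from assms(2) B obtain b where b: "b \<in> B" "f \<in> basic_open b" by auto
  have "basic_open (map f [0..<n]) \<subseteq> basic_open b" if "n \<ge> length b" for n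
  proof
    fix g assume "g \<in> basic_open (map f [0..<n])"
    then have "\<forall>i<n. g i = f i" unfolding basic_open_def by auto
    then show "g \<in> basic_open b" using b(2) that unfolding basic_open_def by auto
  qed
  then show ?thesis using b(1) B by (intro exI[of _ "length b"]) blast
qed

lemma dir2:
  assumes "baire_Delta02 S"
  shows "guessable S"
proof -
  have "baire_G_delta S" and "baire_F_sigma S" using assms unfolding baire_Delta02_def by simp_all
  have "\<exists>U. (\<forall>i::nat. baire_open (U i)) \<and> S = (\<Inter>i. U i)"
    using \<open>baire_G_delta S\<close> unfolding baire_G_delta_def .
  then obtain U where U0: "(\<forall>i::nat. baire_open (U i)) \<and> S = (\<Inter>i. U i)" ..
  note U = conjunct1[OF U0] conjunct2[OF U0]
  have "\<exists>C. (\<forall>i::nat. baire_closed (C i)) \<and> S = (\<Union>i. C i)"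
    using \<open>baire_F_sigma S\<close> unfolding baire_F_sigma_def .
  then obtain C where C0: "(\<forall>i::nat. baire_closed (C i)) \<and> S = (\<Union>i. C i)" ..
  note C = conjunct1[OF C0] conjunct2[OF C0]
  define E where "E k = (if even k then C (k div 2) else - U (k div 2))" for k
  have Ecl: "baire_closed (E k)" for k
    using U(1) C(1) unfolding E_def baire_closed_def by simp
  have Ecov: "\<exists>k. f \<in> E k" for f
  proof (cases "f \<in> S")
    case True
    then obtain i where "f \<in> C i" using C by blast
    then show ?thesis unfolding E_def by (intro exI[of _ "2*i"]) auto
  next
    case False
    then obtain i where "f \<notin> U i" using U by blast
    then show ?thesis unfolding E_def by (intro exI[of _ "2*i+1"]) auto
  qed
  have Epar: "f \<in> E k \<Longrightarrow> even k \<longleftrightarrow> f \<in> S" for f k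
    unfolding E_def using C(2) U(2) by (cases "even k") auto
  define G where "G s = even (LEAST k. basic_open s \<inter> E k \<noteq> {})" for s
  have "guesser G S"
    unfolding guesser_def
  proof
    fix f
    define k0 where "k0 = (LEAST k. f \<in> E k)"
    have fk0: "f \<in> E k0" unfolding k0_def using Ecov by (rule LeastI_ex)
    have "\<forall>k<k0. \<exists>N. \<forall>n\<ge>N. basic_open (map f [0..<n]) \<inter> E k = {}"
    proof (intro allI impI)
      fix k assume "k < k0"
      then have "f \<notin> E k" unfolding k0_def using not_less_Least by blast
      then show "\<exists>N. \<forall>n\<ge>N. basic_open (map f [0..<n]) \<inter> E k = {}"
        by (rule closed_avoid[OF Ecl])
    qed
    then have "\<forall>k. \<exists>N. k < k0 \<longrightarrow> (\<forall>n\<ge>N. basic_open (map f [0..<n]) \<inter> E k = {})"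
      by simp
    then obtain Nf where Nf: "\<forall>k. k < k0 \<longrightarrow> (\<forall>n\<ge>Nf k. basic_open (map f [0..<n]) \<inter> E k = {})"
      by (rule choice[THEN exE])
    define N where "N = (\<Sum>k<k0. Nf k)"
    have NN: "k < k0 \<Longrightarrow> Nf k \<le> N" for k
      unfolding N_def by (rule member_le_sum) auto
    show "\<exists>m>0. \<forall>n>m. G (map f [0..<Suc n]) = (f \<in> S)"
    proof (intro exI[of _ "N+1"] conjI allI impI)
      fix n assume n: "n > N + 1"
      let ?s = "map f [0..<Suc n]"
      have fs: "f \<in> basic_open ?s" using prefix_basic_open by blast
      have "(LEAST k. basic_open ?s \<inter> E k \<noteq> {}) = k0"
      proof (rule Least_equality)
        show "basic_open ?s \<inter> E k0 \<noteq> {}" using fs fk0 by blast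
      next
        fix y assume y: "basic_open ?s \<inter> E y \<noteq> {}"
        show "k0 \<le> y"
        proof (rule ccontr)
          assume "\<not> k0 \<le> y"
          then have "y < k0" by simp
          then have "basic_open ?s \<inter> E y = {}" using Nf[rule_format, of y "Suc n"] NN[of y] n by simp
          then show False using y by blast
        qed
      qed
      then show "G ?s = (f \<in> S)" unfolding G_def using Epar fk0 by simp
    qed simp
  qed
  then show ?thesis unfolding guessable_def by blast
qed

theorem theorem16:
  fixes S :: "(nat \<Rightarrow> nat) set"
  shows "guessable S \<longleftrightarrow> baire_Delta02 S"
proof
  assume "guessable S"
  then obtain G where "guesser G S" unfolding guessable_def by blast
  then show "baire_Delta02 S" by (rule dir1)
next
  assume "baire_Delta02 S"
  then show "guessable S" by (rule dir2)
qed

end
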